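(* For any $\epsilon\in(0,1)$, $\nu_{\mathrm{NQF}}(\{\psi:M^\gamma_{\mathrm{ref}}(\psi)(1)\in(\epsilon,\epsilon^{-1})\})<\infty$. Moreover, if $Z:\mathring H^{0-}_{\mathrm{ref}}\to\mathbb R$ is such that $Z(\psi)$ is a centered Gaussian random variable when $\psi\sim\mu_{\mathrm{ref}}$, then the random variable $Z\big(\psi-\omega_{\mathrm{ref}}(\psi)/\omega_{\mathrm{ref}}(1)\big)\,1_{\{M^\gamma_{\mathrm{ref}}(\psi)(1)\in(\epsilon,\epsilon^{-1})\}}$ lies in $L^p(\nu_{\mathrm{NQF}})$ for all $p\ge1$.
   Context: $M$ closed manifold of even dimension $n$, metric $g_{\mathrm{ref}}$ with volume measure $\omega_{\mathrm{ref}}$, co-polyharmonic (GJMS) operator $P_{\mathrm{ref}}$ (positive semi-definite with kernel the constants) and constant Branson $Q$-curvature $Q_{\mathrm{ref}}$ with $Q_{\mathrm{ref}}(1)=\int Q_{\mathrm{ref}}\omega_{\mathrm{ref}}<(4\pi)^{n/2}(n/2-1)!$. $f\in C^\infty(M)$, $f>0$; $\sigma^2<2n^{-1}(4\pi)^{n/2}(n/2-1)!$; $a_n=\frac{2}{(n/2-1)!(4\pi)^{n/2}}$; $p_{\mathrm{ref}}=a_nP_{\mathrm{ref}}$; $\gamma=n\sigma\sqrt{a_n/2}$. $H^{0-}_{\mathrm{ref}}=\bigcap_{s>0}H^{-s}_{\mathrm{ref}}$ with $H^{s}_{\mathrm{ref}}$ the Sobolev spaces defined via $(1+p_{\mathrm{ref}})^{-s/n}$,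 $\mathring H^{0-}_{\mathrm{ref}}$ the mean-zero part. $\mu_{\mathrm{ref}}$: centered Gaussian measure on $\mathring H^{0-}_{\mathrm{ref}}$ with covariance kernel the Green kernel of $p_{\mathrm{ref}}$ on mean-zero functions. $M^\gamma_{\mathrm{ref}}$: co-polyharmonic Gaussian multiplicative chaos map from $H^{0-}_{\mathrm{ref}}$ to finite Borel measures, with $M^\gamma_{\mathrm{ref}}(\psi+c)=e^{\gamma c}M^\gamma_{\mathrm{ref}}(\psi)$ and $\mathbb E_{\mu_{\mathrm{ref}}}[M^\gamma_{\mathrm{ref}}(\psi)(1)^q]<\infty$ for $q<2n/\gamma^2$. $\nu_{\mathrm{NQF}}(A)=\int_{\mathbb R}\int_{\mathring H^{0-}_{\mathrm{ref}}}1_A(\psi+c)M^\gamma_{\mathrm{ref}}(\psi)(f)^{2Q_{\mathrm{ref}}(1)/(n\sigma^2)}\mu_{\mathrm{ref}}(d\psi)dc$. *)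

theory Defs
  imports "HOL-Probability.Probability"
begin

text \<open>The distribution space H^{0-} is modelled by a real vector type 'h (with the
  constant function 1 given as an element one), the manifold by a compact
  topological type 'm, and the GMC map by Mc :: 'h => 'm measure.\<close>

definition meas_pair :: "'m measure \<Rightarrow> ('m \<Rightarrow> real) \<Rightarrow> real" where
  "meas_pair m g = integral\<^sup>L m g"

definition nu_NQF ::
  "'h::real_vector measure \<Rightarrow> ('h \<Rightarrow> 'm measure) \<Rightarrow> ('m \<Rightarrow> real) \<Rightarrow> real \<Rightarrow> 'h \<Rightarrow> 'h measure" where
  "nu_NQF \<mu> Mc f s one =
     measure_of (space \<mu>) (sets \<mu>)
       (\<lambda>A. \<integral>\<^sup>+ c. (\<integral>\<^sup>+ \<psi>. indicator A (\<psi> + c *\<^sub>R one)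
               * ennreal (meas_pair (Mc \<psi>) f powr s) \<partial>\<mu>) \<partial>lborel)"

definition centered_gaussian :: "real measure \<Rightarrow> bool" where
  "centered_gaussian D \<longleftrightarrow> (\<exists>v\<ge>0. D = (if v = 0 then return borel 0
                                           else density lborel (normal_density 0 (sqrt v))))"

end

theory Submission
  imports Defs
begin


lemma nu_repr:
  fixes \<mu> :: "'h::real_vector measure" and one :: 'h and G :: "'h \<Rightarrow> real"
  assumes mu_prob: "prob_space \<mu>" and mu_space: "space \<mu> = UNIV"
    and shift_meas: "(\<lambda>(\<psi>, c). \<psi> + c *\<^sub>R one) \<in> (\<mu> \<Otimes>\<^sub>M borel) \<rightarrow>\<^sub>M \<mu>"
    and G_def: "\<And>\<psi>. G \<psi> = meas_pair (Mc \<psi>) f powr s"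
    and G_meas: "G \<in> borel_measurable \<mu>"
    and h_meas: "h \<in> borel_measurable \<mu>"
  shows "(\<integral>\<^sup>+ \<phi>. h \<phi> \<partial>nu_NQF \<mu> Mc f s one)
      = (\<integral>\<^sup>+ \<psi>. \<integral>\<^sup>+ c. h (\<psi> + c *\<^sub>R one) * ennreal (G \<psi>) \<partial>lborel \<partial>\<mu>)"
    and "sets (nu_NQF \<mu> Mc f s one) = sets \<mu>"
proof -
  interpret P: prob_space \<mu> by (rule mu_prob)
  interpret pair_sigma_finite \<mu> "lborel::real measure" by unfold_locales
  define sh where "sh = (\<lambda>(\<psi>, c). \<psi> + c *\<^sub>R (one::'h))"
  have shm: "sh \<in> (\<mu> \<Otimes>\<^sub>M lborel) \<rightarrow>\<^sub>M \<mu>"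
  proof -
    have "measurable (\<mu> \<Otimes>\<^sub>M lborel) \<mu> = measurable (\<mu> \<Otimes>\<^sub>M borel) \<mu>"
      by (intro measurable_cong_sets sets_pair_measure_cong) auto
    then show ?thesis using shift_meas unfolding sh_def by simp
  qed
  define D where "D = density (\<mu> \<Otimes>\<^sub>M (lborel::real measure)) (\<lambda>x. ennreal (G (fst x)))"
  define N where "N = distr D \<mu> sh"
  have sD: "sets D = sets (\<mu> \<Otimes>\<^sub>M lborel)" unfolding D_def by simp
  have shm': "sh \<in> D \<rightarrow>\<^sub>M \<mu>" using shm measurable_cong_sets[OF sD refl, of \<mu>] by simp
  have Gm: "(\<lambda>x. ennreal (G (fst x))) \<in> borel_measurable (\<mu> \<Otimes>\<^sub>M lborel)"
    using G_meas by measurable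
  have intN: "(\<integral>\<^sup>+ \<phi>. k \<phi> \<partial>N) = (\<integral>\<^sup>+ \<psi>. \<integral>\<^sup>+ c. k (\<psi> + c *\<^sub>R one) * ennreal (G \<psi>) \<partial>lborel \<partial>\<mu>)"
    if km: "k \<in> borel_measurable \<mu>" for k
  proof -
    have km2: "(\<lambda>x. k (sh x)) \<in> borel_measurable (\<mu> \<Otimes>\<^sub>M lborel)"
      using measurable_comp[OF shm km] by (simp add: comp_def)
    have "(\<integral>\<^sup>+ \<phi>. k \<phi> \<partial>N) = (\<integral>\<^sup>+ x. k (sh x) \<partial>D)"
      unfolding N_def using shm' km by (subst nn_integral_distr) auto
    also have "\<dots> = (\<integral>\<^sup>+ x. ennreal (G (fst x)) * k (sh x) \<partial>(\<mu> \<Otimes>\<^sub>M lborel))"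
      unfolding D_def by (rule nn_integral_density[OF Gm km2])
    also have "\<dots> = (\<integral>\<^sup>+ \<psi>. \<integral>\<^sup>+ c. ennreal (G \<psi>) * k (sh (\<psi>, c)) \<partial>lborel \<partial>\<mu>)"
      using lborel.nn_integral_fst[OF borel_measurable_times_ennreal[OF Gm km2]] by simp
    finally show ?thesis by (simp add: sh_def mult.commute)
  qed
  have sN: "sets N = sets \<mu>" "space N = space \<mu>" unfolding N_def by auto
  have nuN: "nu_NQF \<mu> Mc f s one = N"
  proof -
    have "nu_NQF \<mu> Mc f s one = measure_of (space N) (sets N) (emeasure N)"
    proof (unfold nu_NQF_def sN, rule measure_of_eq)
      show "sets \<mu> \<subseteq> Pow (space \<mu>)" by (rule sets.space_closed)
      fix a assume "a \<in> sigma_sets (space \<mu>) (sets \<mu>)"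
      then have a: "a \<in> sets \<mu>" by (simp add: sets.sigma_sets_eq)
      have im: "(\<lambda>x. indicator a (sh x) * ennreal (G (fst x))) \<in> borel_measurable (\<mu> \<Otimes>\<^sub>M lborel)"
        using borel_measurable_times_ennreal[OF measurable_comp[OF shm borel_measurable_indicator[OF a]] Gm]
        by (simp add: comp_def)
      have "emeasure N a = (\<integral>\<^sup>+ \<phi>. indicator a \<phi> \<partial>N)"
        using a sN by simp
      also have "\<dots> = (\<integral>\<^sup>+ \<psi>. \<integral>\<^sup>+ c. indicator a (\<psi> + c *\<^sub>R one) * ennreal (G \<psi>) \<partial>lborel \<partial>\<mu>)"
        using intN a by simp
      also have "\<dots> = (\<integral>\<^sup>+ c. \<integral>\<^sup>+ \<psi>. indicator a (\<psi> + c *\<^sub>R one) * ennreal (G \<psi>) \<partial>\<mu> \<partial>lborel)"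
        using Fubini[OF im] by (simp add: sh_def)
      finally show "(\<lambda>A. \<integral>\<^sup>+ c. \<integral>\<^sup>+ \<psi>. indicator A (\<psi> + c *\<^sub>R one) * ennreal (meas_pair (Mc \<psi>) f powr s) \<partial>\<mu> \<partial>lborel) a
          = emeasure N a" by (simp add: G_def)
    qed
    also have "\<dots> = N" by (rule measure_of_of_measure)
    finally show ?thesis .
  qed
  show "(\<integral>\<^sup>+ \<phi>. h \<phi> \<partial>nu_NQF \<mu> Mc f s one)
      = (\<integral>\<^sup>+ \<psi>. \<integral>\<^sup>+ c. h (\<psi> + c *\<^sub>R one) * ennreal (G \<psi>) \<partial>lborel \<partial>\<mu>)"
    using intN[OF h_meas] nuN by simp
  show "sets (nu_NQF \<mu> Mc f s one) = sets \<mu>" using nuN sN by simp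
qed



lemma young_simple:
  fixes x y R :: real assumes "x \<ge> 0" "y \<ge> 0" "R > 1"
  shows "x * y \<le> x powr (R/(R-1)) + y powr R"
proof -
  have R1: "R/(R-1) > 1" using assms by (simp add: field_simps)
  have "1/(R/(R-1)) + 1/R = 1" using assms by (simp add: field_simps)
  then have "x * y \<le> x powr (R/(R-1)) / (R/(R-1)) + y powr R / R"
    using Youngs_inequality[OF R1 assms(3) _ assms(1,2)] by simp
  also have "\<dots> \<le> x powr (R/(R-1)) + y powr R"
  proof -
    have "x powr (R/(R-1)) / (R/(R-1)) \<le> x powr (R/(R-1)) / 1"
      using R1 by (intro divide_left_mono) auto
    moreover have "y powr R / R \<le> y powr R / 1" using assms by (intro divide_left_mono) auto
    ultimately show ?thesis by linarith
  qed
  finally show ?thesis .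
qed

lemma abs_powr_bound:
  fixes x q :: real assumes "q \<ge> 0"
  shows "\<bar>x\<bar> powr q \<le> 1 + \<bar>x\<bar> ^ nat \<lceil>q\<rceil>"
proof (cases "\<bar>x\<bar> \<le> 1")
  case True
  then have "\<bar>x\<bar> powr q \<le> 1"
    using powr_mono2[OF assms _ True] by simp
  then show ?thesis by (smt (verit) zero_le_power abs_ge_zero)
next
  case False
  then have "\<bar>x\<bar> powr q \<le> \<bar>x\<bar> powr (real (nat \<lceil>q\<rceil>))"
    by (intro powr_mono) (use assms in auto)
  also have "\<dots> = \<bar>x\<bar> ^ nat \<lceil>q\<rceil>" using False by (simp add: powr_realpow)
  finally show ?thesis by simp
qed

lemma gauss_moment:
  fixes Z :: "'h \<Rightarrow> real"
  assumes Zm: "Z \<in> borel_measurable \<mu>" and Zg: "centered_gaussian (distr \<mu> borel Z)"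
    and q: "q \<ge> 0"
  shows "(\<integral>\<^sup>+ \<psi>. ennreal (\<bar>Z \<psi>\<bar> powr q) \<partial>\<mu>) < \<infinity>"
proof -
  have "(\<integral>\<^sup>+ \<psi>. ennreal (\<bar>Z \<psi>\<bar> powr q) \<partial>\<mu>) = (\<integral>\<^sup>+ x. ennreal (\<bar>x\<bar> powr q) \<partial>distr \<mu> borel Z)"
    using Zm by (subst nn_integral_distr) auto
  also have "\<dots> < \<infinity>"
  proof -
    obtain v where v: "v \<ge> 0" and D: "distr \<mu> borel Z = (if v = 0 then return borel 0
        else density lborel (normal_density 0 (sqrt v)))"
      using Zg unfolding centered_gaussian_def by blast
    show ?thesis
    proof (cases "v = 0")
      case True
      then show ?thesis using D by (simp add: nn_integral_return)
    next
      case False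
      define k where "k = nat \<lceil>q\<rceil>"
      let ?nd = "normal_density 0 (sqrt v)"
      have "(\<integral>\<^sup>+ x. ennreal (\<bar>x\<bar> powr q) \<partial>distr \<mu> borel Z)
          = (\<integral>\<^sup>+ x. ennreal (?nd x) * ennreal (\<bar>x\<bar> powr q) \<partial>lborel)"
        using D False by (simp add: nn_integral_density)
      also have "\<dots> \<le> (\<integral>\<^sup>+ x. ennreal (norm (?nd x + ?nd x * \<bar>x - 0\<bar> ^ k)) \<partial>lborel)"
      proof (rule nn_integral_mono)
        fix x
        have "?nd x * (\<bar>x\<bar> powr q) \<le> ?nd x * (1 + \<bar>x\<bar> ^ k)"
          using abs_powr_bound[OF q, of x] unfolding k_def
          by (intro mult_left_mono) auto
        then show "ennreal (?nd x) * ennreal (\<bar>x\<bar> powr q) \<le> ennreal (norm (?nd x + ?nd x * \<bar>x - 0\<bar> ^ k))"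
        proof -
          have e1: "ennreal (?nd x) * ennreal (\<bar>x\<bar> powr q) = ennreal (?nd x * \<bar>x\<bar> powr q)"
            by (simp add: ennreal_mult'')
          have e2: "norm (?nd x + ?nd x * \<bar>x - 0\<bar> ^ k) = ?nd x * (1 + \<bar>x\<bar> ^ k)"
            by (simp add: algebra_simps)
          show ?thesis unfolding e1 e2 by (rule ennreal_leI) fact
        qed
      qed
      also have "\<dots> < \<infinity>"
      proof -
        have "integrable lborel (\<lambda>x. ?nd x + ?nd x * \<bar>x - 0\<bar> ^ k)"
          using v False by (intro Bochner_Integration.integrable_add integrable_normal_density integrable_normal_moment_abs) auto
        then show ?thesis by (simp add: integrable_iff_bounded)
      qed
      finally show ?thesis .
    qed
  qed
  finally show ?thesis .
qed



theorem mainTheorem7: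
  fixes n :: nat and \<sigma> Q1 :: real
    and \<mu> :: "'h::real_vector measure"
    and one :: 'h and \<omega> :: "'h \<Rightarrow> real"
    and Mc :: "'h \<Rightarrow> 'm::topological_space measure"
    and f :: "'m \<Rightarrow> real"
    and Z :: "'h \<Rightarrow> real" and \<epsilon> :: real
  defines "\<gamma> \<equiv> real n * \<sigma> * sqrt ((2 / (fact (n div 2 - 1) * (4 * pi) ^ (n div 2))) / 2)"
    and "\<nu> \<equiv> nu_NQF \<mu> Mc f (2 * Q1 / (real n * \<sigma>\<^sup>2)) one"
    and "E \<equiv> {\<phi>. meas_pair (Mc \<phi>) (\<lambda>_. 1) \<in> {\<epsilon><..<1/\<epsilon>}}"
  assumes n: "even n" "n \<ge> 2"
    and Q1: "Q1 < (4 * pi) ^ (n div 2) * fact (n div 2 - 1)"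
    and sigma: "\<sigma> > 0" "\<sigma>\<^sup>2 < 2 / real n * (4 * pi) ^ (n div 2) * fact (n div 2 - 1)"
    and M_cpt: "compact (UNIV :: 'm set)"
    and f_cont: "continuous_on UNIV f" and f_pos: "\<And>x. f x > 0"
    and mu_prob: "prob_space \<mu>" and mu_space: "space \<mu> = UNIV"
    and omega_lin: "linear \<omega>" and omega_one: "\<omega> one > 0"
    and mu_meanzero: "AE \<psi> in \<mu>. \<omega> \<psi> = 0"
    and shift_meas: "(\<lambda>(\<psi>, c). \<psi> + c *\<^sub>R one) \<in> (\<mu> \<Otimes>\<^sub>M borel) \<rightarrow>\<^sub>M \<mu>"
    and center_meas: "(\<lambda>\<psi>. \<psi> - (\<omega> \<psi> / \<omega> one) *\<^sub>R one) \<in> \<mu> \<rightarrow>\<^sub>M \<mu>"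
    and Mc_finite: "\<And>\<psi>. finite_measure (Mc \<psi>)"
    and Mc_sets: "\<And>\<psi>. sets (Mc \<psi>) = sets borel"
    and Mc_meas: "\<And>g. g \<in> borel_measurable borel \<Longrightarrow>
                    (\<lambda>\<psi>. meas_pair (Mc \<psi>) g) \<in> borel_measurable \<mu>"
    and Mc_shift: "\<And>\<psi> c. Mc (\<psi> + c *\<^sub>R one) = scale_measure (ennreal (exp (\<gamma> * c))) (Mc \<psi>)"
    and Mc_moments: "\<And>q. q < 2 * real n / \<gamma>\<^sup>2 \<Longrightarrow>
                    (\<integral>\<^sup>+ \<psi>. ennreal (meas_pair (Mc \<psi>) (\<lambda>_. 1) powr q) \<partial>\<mu>) < \<infinity>"
    and Z_meas: "Z \<in> borel_measurable \<mu>"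
    and Z_gauss: "centered_gaussian (distr \<mu> borel Z)"
    and eps: "0 < \<epsilon>" "\<epsilon> < 1"
  shows "emeasure \<nu> E < \<infinity> \<and>
         (\<forall>p::real. p \<ge> 1 \<longrightarrow>
            (\<lambda>\<phi>. Z (\<phi> - (\<omega> \<phi> / \<omega> one) *\<^sub>R one) * indicator E \<phi>) \<in> borel_measurable \<nu> \<and>
            (\<integral>\<^sup>+ \<phi>. ennreal (\<bar>Z (\<phi> - (\<omega> \<phi> / \<omega> one) *\<^sub>R one) * indicator E \<phi>\<bar> powr p) \<partial>\<nu>) < \<infinity>)"
  proof -
  interpret P: prob_space \<mu> by (rule mu_prob)
  define s where "s = 2 * Q1 / (real n * \<sigma>\<^sup>2)"
  define m where "m = (\<lambda>\<psi>. meas_pair (Mc \<psi>) (\<lambda>_. 1))"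
  define G where "G = (\<lambda>\<psi>. meas_pair (Mc \<psi>) f powr s)"
  define F :: real where "F = fact (n div 2 - 1) * (4 * pi) ^ (n div 2)"
  have Fpos: "F > 0" unfolding F_def by simp
  have npos: "real n > 0" using n by simp
  have nuq: "\<nu> = nu_NQF \<mu> Mc f s one" by (simp add: \<nu>_def s_def)
  have fm: "f \<in> borel_measurable borel" by (rule borel_measurable_continuous_onI[OF f_cont])
  have Gm: "G \<in> borel_measurable \<mu>" unfolding G_def
    using Mc_meas[OF fm] by measurable
  have mm: "m \<in> borel_measurable \<mu>" unfolding m_def by (rule Mc_meas) simp
  have gsq: "\<gamma>\<^sup>2 = (real n)\<^sup>2 * \<sigma>\<^sup>2 / F"
    unfolding \<gamma>_def F_def using Fpos unfolding F_def
    by (simp add: power_mult_distrib)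
  have gpos: "\<gamma> > 0" unfolding \<gamma>_def using npos sigma(1) Fpos unfolding F_def
    by (intro mult_pos_pos) auto
  define B0 where "B0 = 2 * real n / \<gamma>\<^sup>2"
  have B0pos: "B0 > 0" unfolding B0_def using gpos npos by simp
  have s_lt: "s < B0"
  proof -
    have B0eq: "B0 = 2 * F / (real n * \<sigma>\<^sup>2)"
      unfolding B0_def gsq using npos sigma(1) Fpos by (simp add: field_simps power2_eq_square)
    have "Q1 < F" using Q1 unfolding F_def by (simp add: mult.commute)
    then show ?thesis unfolding B0eq s_def using npos sigma(1)
      by (intro divide_strict_right_mono) auto
  qed
  obtain a b where apos: "a > 0" and fa: "\<And>x. a \<le> f x" and fb: "\<And>x. f x \<le> b"
  proof -
    have cpt: "compact (range f)" by (rule compact_continuous_image[OF f_cont M_cpt])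
    obtain y0 where y0: "y0 \<in> range f" "\<And>y. y \<in> range f \<Longrightarrow> y0 \<le> y"
      using compact_attains_inf[OF cpt] by blast
    obtain b where "\<forall>y\<in>range f. \<bar>y\<bar> \<le> b"
      using compact_imp_bounded[OF cpt] unfolding bounded_real by blast
    then have "\<And>x. f x \<le> b" by (meson abs_ge_self order_trans rangeI)
    moreover have "y0 > 0" using y0(1) f_pos by blast
    moreover have "\<And>x. y0 \<le> f x" using y0(2) by blast
    ultimately show ?thesis using that by blast
  qed
  have mb: "0 \<le> m \<psi> \<and> a * m \<psi> \<le> meas_pair (Mc \<psi>) f \<and> meas_pair (Mc \<psi>) f \<le> b * m \<psi>" for \<psi>
  proof -
    interpret FM: finite_measure "Mc \<psi>" by (rule Mc_finite)
    have sp: "space (Mc \<psi>) = UNIV" using sets_eq_imp_space_eq[OF Mc_sets[of \<psi>]] by simp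
    have fmc: "f \<in> borel_measurable (Mc \<psi>)"
      using fm by (simp add: measurable_cong_sets[OF Mc_sets[of \<psi>] refl])
    have fint: "integrable (Mc \<psi>) f"
      by (rule FM.integrable_const_bound[where B = b]) (use fmc f_pos fb in \<open>auto simp: less_imp_le\<close>)
    have meq: "m \<psi> = measure (Mc \<psi>) (space (Mc \<psi>))" unfolding m_def meas_pair_def by simp
    have "integral\<^sup>L (Mc \<psi>) (\<lambda>_. a) \<le> integral\<^sup>L (Mc \<psi>) f"
      by (rule integral_mono[OF _ fint]) (auto simp: fa)
    moreover have "integral\<^sup>L (Mc \<psi>) f \<le> integral\<^sup>L (Mc \<psi>) (\<lambda>_. b)"
      by (rule integral_mono[OF fint]) (auto simp: fb)
    ultimately show ?thesis unfolding meq meas_pair_def by (simp add: mult.commute)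
  qed
  define Cf where "Cf = max (a powr s) (b powr s)"
  have Cfpos: "Cf \<ge> 0" unfolding Cf_def by (simp add: le_max_iff_disj)
  have Gb: "0 \<le> G \<psi> \<and> G \<psi> \<le> Cf * m \<psi> powr s" for \<psi>
  proof (cases "m \<psi> = 0")
    case True
    then have "meas_pair (Mc \<psi>) f = 0" using mb[of \<psi>] by simp
    then show ?thesis unfolding G_def using True by simp
  next
    case False
    then have mp: "m \<psi> > 0" using mb[of \<psi>] by simp
    let ?x = "meas_pair (Mc \<psi>) f"
    have xa: "a * m \<psi> \<le> ?x" and xb: "?x \<le> b * m \<psi>" using mb[of \<psi>] by auto
    have amp: "a * m \<psi> > 0" using apos mp by simp
    have "?x powr s \<le> Cf * m \<psi> powr s"
    proof (cases "s \<ge> 0")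
      case True
      have "?x powr s \<le> (b * m \<psi>) powr s" using xa xb amp True by (intro powr_mono2) auto
      also have "\<dots> = b powr s * m \<psi> powr s" using xa xb amp mp by (simp add: powr_mult)
      also have "\<dots> \<le> Cf * m \<psi> powr s" unfolding Cf_def by (intro mult_right_mono) auto
      finally show ?thesis .
    next
      case False
      have "?x powr s \<le> (a * m \<psi>) powr s" using xa amp False by (intro powr_mono2') auto
      also have "\<dots> = a powr s * m \<psi> powr s" using apos mp by (simp add: powr_mult)
      also have "\<dots> \<le> Cf * m \<psi> powr s" unfolding Cf_def by (intro mult_right_mono) auto
      finally show ?thesis .
    qed
    then show ?thesis unfolding G_def by simp
  qed
  have mshift: "m (\<psi> + c *\<^sub>R one) = exp (\<gamma> * c) * m \<psi>" for \<psi> c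
    unfolding m_def meas_pair_def Mc_shift by (simp add: space_scale_measure)
  have Em: "E \<in> sets \<mu>"
  proof -
    have "m -` {\<epsilon><..<1/\<epsilon>} \<inter> space \<mu> \<in> sets \<mu>" by (rule measurable_sets[OF mm]) auto
    then show ?thesis unfolding E_def m_def using mu_space by (simp add: vimage_def)
  qed
  define L where "L = - 2 * ln \<epsilon> / \<gamma>"
  have shc: "(\<lambda>c::real. \<psi> + c *\<^sub>R one) \<in> lborel \<rightarrow>\<^sub>M \<mu>" for \<psi>
  proof -
    have "(\<lambda>c::real. (\<psi>, c)) \<in> borel \<rightarrow>\<^sub>M \<mu> \<Otimes>\<^sub>M borel"
      using mu_space by (intro measurable_Pair2) auto
    from measurable_compose[OF this shift_meas] show ?thesis by simp
  qed
  have indm: "(\<lambda>c::real. indicator E (\<psi> + c *\<^sub>R one) :: ennreal) \<in> borel_measurable lborel" for \<psi>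
    using measurable_compose[OF shc borel_measurable_indicator[OF Em]] by simp
  have inner: "(\<integral>\<^sup>+ c. indicator E (\<psi> + c *\<^sub>R one) \<partial>lborel) \<le> ennreal L" for \<psi>
  proof (cases "m \<psi> = 0")
    case True
    then have "indicator E (\<psi> + c *\<^sub>R one) = (0::ennreal)" for c
    proof -
      have "m (\<psi> + c *\<^sub>R one) = 0" using mshift True by simp
      then show ?thesis using eps unfolding E_def m_def by (simp add: indicator_def)
    qed
    then show ?thesis by simp
  next
    case False
    then have mp: "m \<psi> > 0" using mb[of \<psi>] by simp
    define lo where "lo = (ln \<epsilon> - ln (m \<psi>)) / \<gamma>"
    define hi where "hi = (- ln \<epsilon> - ln (m \<psi>)) / \<gamma>"
    have "\<psi> + c *\<^sub>R one \<in> E \<longleftrightarrow> c \<in> {lo<..<hi}" for c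
    proof -
      have me: "m (\<psi> + c *\<^sub>R one) = exp (\<gamma> * c + ln (m \<psi>))"
        using mp by (simp add: mshift exp_add)
      have "\<psi> + c *\<^sub>R one \<in> E \<longleftrightarrow> exp (ln \<epsilon>) < exp (\<gamma> * c + ln (m \<psi>)) \<and>
          exp (\<gamma> * c + ln (m \<psi>)) < exp (- ln \<epsilon>)"
        unfolding E_def using eps by (simp add: me[unfolded m_def] exp_minus inverse_eq_divide m_def)
      also have "\<dots> \<longleftrightarrow> ln \<epsilon> - ln (m \<psi>) < \<gamma> * c \<and> \<gamma> * c < - ln \<epsilon> - ln (m \<psi>)"
        by (simp only: exp_less_cancel_iff) linarith
      also have "\<dots> \<longleftrightarrow> c \<in> {lo<..<hi}"
        unfolding lo_def hi_def using gpos by (simp add: pos_divide_less_eq pos_less_divide_eq mult.commute)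
      finally show ?thesis .
    qed
    then have "(\<integral>\<^sup>+ c. indicator E (\<psi> + c *\<^sub>R one) \<partial>lborel) = (\<integral>\<^sup>+ c. indicator {lo<..<hi} c \<partial>lborel)"
      by (intro nn_integral_cong) (simp add: indicator_def)
    also have "\<dots> = ennreal (hi - lo)"
    proof -
      have "ln \<epsilon> < 0" using eps by simp
      then have "lo \<le> hi" unfolding lo_def hi_def using gpos by (intro divide_right_mono) auto
      then show ?thesis by simp
    qed
    also have "hi - lo = L" unfolding hi_def lo_def L_def using gpos by (simp add: field_simps)
    finally show ?thesis by simp
  qed
  have Lpos: "L \<ge> 0" unfolding L_def using gpos eps by (simp add: divide_nonpos_pos)
  have G_def': "\<And>\<psi>. G \<psi> = meas_pair (Mc \<psi>) f powr s" by (simp add: G_def)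
  have s\<nu>: "sets \<nu> = sets \<mu>"
    unfolding nuq by (rule nu_repr(2)[OF mu_prob mu_space shift_meas G_def' Gm, of "\<lambda>_. 0"]) simp
  have repr: "(\<integral>\<^sup>+ \<phi>. h \<phi> \<partial>\<nu>) = (\<integral>\<^sup>+ \<psi>. \<integral>\<^sup>+ c. h (\<psi> + c *\<^sub>R one) * ennreal (G \<psi>) \<partial>lborel \<partial>\<mu>)"
    if "h \<in> borel_measurable \<mu>" for h
    unfolding nuq by (rule nu_repr(1)[OF mu_prob mu_space shift_meas G_def' Gm that])
  have msfin: "(\<integral>\<^sup>+ \<psi>. ennreal (m \<psi> powr q) \<partial>\<mu>) < \<infinity>" if "q < B0" for q
    using Mc_moments[of q] that unfolding B0_def m_def by simp
  have part1: "emeasure \<nu> E < \<infinity>"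
  proof -
    have "emeasure \<nu> E = (\<integral>\<^sup>+ \<phi>. indicator E \<phi> \<partial>\<nu>)" using Em s\<nu> by simp
    also have "\<dots> = (\<integral>\<^sup>+ \<psi>. \<integral>\<^sup>+ c. indicator E (\<psi> + c *\<^sub>R one) * ennreal (G \<psi>) \<partial>lborel \<partial>\<mu>)"
      using Em by (intro repr) simp
    also have "\<dots> \<le> (\<integral>\<^sup>+ \<psi>. ennreal (L * Cf) * ennreal (m \<psi> powr s) \<partial>\<mu>)"
    proof (rule nn_integral_mono)
      fix \<psi>
      have "(\<integral>\<^sup>+ c. indicator E (\<psi> + c *\<^sub>R one) * ennreal (G \<psi>) \<partial>lborel)
          = (\<integral>\<^sup>+ c. indicator E (\<psi> + c *\<^sub>R one) \<partial>lborel) * ennreal (G \<psi>)"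
        by (rule nn_integral_multc[OF indm])
      also have "\<dots> \<le> ennreal L * ennreal (Cf * m \<psi> powr s)"
        using Gb[of \<psi>] inner[of \<psi>] by (intro mult_mono) (auto intro: ennreal_leI)
      also have "\<dots> = ennreal (L * Cf) * ennreal (m \<psi> powr s)"
        using Lpos Cfpos by (simp add: ennreal_mult'' mult.assoc)
      finally show "(\<integral>\<^sup>+ c. indicator E (\<psi> + c *\<^sub>R one) * ennreal (G \<psi>) \<partial>lborel)
          \<le> ennreal (L * Cf) * ennreal (m \<psi> powr s)" .
    qed
    also have "\<dots> = ennreal (L * Cf) * (\<integral>\<^sup>+ \<psi>. ennreal (m \<psi> powr s) \<partial>\<mu>)"
      using mm by (intro nn_integral_cmult) measurable
    also have "\<dots> < \<infinity>"
      using msfin[OF s_lt] by (simp add: ennreal_mult_less_top)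
    finally show ?thesis .
  qed
  define R where "R = (if s \<le> 0 then 2 else (s + B0) / (2 * s))"
  have R1: "R > 1" and sR: "s * R < B0"
  proof -
    show "R > 1" unfolding R_def using s_lt by (auto simp: field_simps)
    show "s * R < B0" unfolding R_def using s_lt B0pos by (auto simp: field_simps)
  qed
  define Rz where "Rz = R / (R - 1)"
  have Rzpos: "Rz > 0" unfolding Rz_def using R1 by simp
  define cen where "cen = (\<lambda>\<phi>. \<phi> - (\<omega> \<phi> / \<omega> one) *\<^sub>R one)"
  have Zc: "(\<lambda>\<phi>. Z (cen \<phi>)) \<in> borel_measurable \<mu>"
    unfolding cen_def using measurable_compose[OF center_meas Z_meas] .
  have cen_shift: "cen (\<psi> + c *\<^sub>R one) = \<psi>" if "\<omega> \<psi> = 0" for \<psi> c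
  proof -
    have "\<omega> (\<psi> + c *\<^sub>R one) = c * \<omega> one"
      using that by (simp add: linear_add[OF omega_lin] linear_scale[OF omega_lin])
    then show ?thesis unfolding cen_def using omega_one by simp
  qed
  have part2: "(\<lambda>\<phi>. Z (cen \<phi>) * indicator E \<phi>) \<in> borel_measurable \<nu> \<and>
      (\<integral>\<^sup>+ \<phi>. ennreal (\<bar>Z (cen \<phi>) * indicator E \<phi>\<bar> powr p) \<partial>\<nu>) < \<infinity>" if p: "p \<ge> 1" for p
  proof
    have m1: "(\<lambda>\<phi>. Z (cen \<phi>) * indicator E \<phi>) \<in> borel_measurable \<mu>"
      by (rule borel_measurable_times[OF Zc borel_measurable_indicator[OF Em]])
    then show "(\<lambda>\<phi>. Z (cen \<phi>) * indicator E \<phi>) \<in> borel_measurable \<nu>"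
      by (simp add: measurable_cong_sets[OF s\<nu> refl])
    have hm: "(\<lambda>\<phi>. ennreal (\<bar>Z (cen \<phi>) * indicator E \<phi>\<bar> powr p)) \<in> borel_measurable \<mu>"
      using m1 by measurable
    have "(\<integral>\<^sup>+ \<phi>. ennreal (\<bar>Z (cen \<phi>) * indicator E \<phi>\<bar> powr p) \<partial>\<nu>)
        = (\<integral>\<^sup>+ \<psi>. \<integral>\<^sup>+ c. ennreal (\<bar>Z (cen (\<psi> + c *\<^sub>R one)) * indicator E (\<psi> + c *\<^sub>R one)\<bar> powr p)
              * ennreal (G \<psi>) \<partial>lborel \<partial>\<mu>)"
      by (rule repr[OF hm])
    also have "\<dots> \<le> (\<integral>\<^sup>+ \<psi>. ennreal (L * Cf) * (ennreal (\<bar>Z \<psi>\<bar> powr (p * Rz)) + ennreal (m \<psi> powr (s * R))) \<partial>\<mu>)"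
    proof (rule nn_integral_mono_AE)
      show "AE \<psi> in \<mu>. (\<integral>\<^sup>+ c. ennreal (\<bar>Z (cen (\<psi> + c *\<^sub>R one)) * indicator E (\<psi> + c *\<^sub>R one)\<bar> powr p)
              * ennreal (G \<psi>) \<partial>lborel) \<le> ennreal (L * Cf) * (ennreal (\<bar>Z \<psi>\<bar> powr (p * Rz)) + ennreal (m \<psi> powr (s * R)))"
        using mu_meanzero
      proof eventually_elim
        case (elim \<psi>)
        define A where "A = \<bar>Z \<psi>\<bar> powr p"
        have A0: "A \<ge> 0" unfolding A_def by simp
        have pt: "ennreal (\<bar>Z (cen (\<psi> + c *\<^sub>R one)) * indicator E (\<psi> + c *\<^sub>R one)\<bar> powr p) * ennreal (G \<psi>)
            \<le> ennreal (A * (Cf * m \<psi> powr s)) * indicator E (\<psi> + c *\<^sub>R one)" for c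
        proof -
          have "\<bar>Z (cen (\<psi> + c *\<^sub>R one)) * indicator E (\<psi> + c *\<^sub>R one)\<bar> powr p
              = A * indicator E (\<psi> + c *\<^sub>R one)"
            unfolding A_def cen_shift[OF elim] using p by (simp add: indicator_def)
          then have "ennreal (\<bar>Z (cen (\<psi> + c *\<^sub>R one)) * indicator E (\<psi> + c *\<^sub>R one)\<bar> powr p) * ennreal (G \<psi>)
              = ennreal (A * G \<psi>) * indicator E (\<psi> + c *\<^sub>R one)"
            using A0 Gb[of \<psi>] by (simp add: indicator_def ennreal_mult'')
          also have "\<dots> \<le> ennreal (A * (Cf * m \<psi> powr s)) * indicator E (\<psi> + c *\<^sub>R one)"
            using A0 Gb[of \<psi>] by (intro mult_right_mono ennreal_leI mult_left_mono) auto
          finally show ?thesis .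
        qed
        have "(\<integral>\<^sup>+ c. ennreal (\<bar>Z (cen (\<psi> + c *\<^sub>R one)) * indicator E (\<psi> + c *\<^sub>R one)\<bar> powr p)
              * ennreal (G \<psi>) \<partial>lborel)
            \<le> (\<integral>\<^sup>+ c. ennreal (A * (Cf * m \<psi> powr s)) * indicator E (\<psi> + c *\<^sub>R one) \<partial>lborel)"
          by (rule nn_integral_mono) (rule pt)
        also have "\<dots> = ennreal (A * (Cf * m \<psi> powr s)) * (\<integral>\<^sup>+ c. indicator E (\<psi> + c *\<^sub>R one) \<partial>lborel)"
          by (rule nn_integral_cmult[OF indm])
        also have "\<dots> \<le> ennreal (A * (Cf * m \<psi> powr s)) * ennreal L"
          by (intro mult_left_mono inner) auto
        also have "\<dots> = ennreal (L * Cf * (A * m \<psi> powr s))"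
          using A0 Cfpos Lpos by (simp add: ennreal_mult'' [symmetric] mult_ac)
        also have "\<dots> \<le> ennreal (L * Cf * (\<bar>Z \<psi>\<bar> powr (p * Rz) + m \<psi> powr (s * R)))"
        proof (intro ennreal_leI mult_left_mono)
          have "A * m \<psi> powr s \<le> A powr Rz + (m \<psi> powr s) powr R"
            unfolding Rz_def by (rule young_simple[OF A0 _ R1]) simp
          also have "\<dots> = \<bar>Z \<psi>\<bar> powr (p * Rz) + m \<psi> powr (s * R)"
            unfolding A_def by (simp add: powr_powr)
          finally show "A * m \<psi> powr s \<le> \<bar>Z \<psi>\<bar> powr (p * Rz) + m \<psi> powr (s * R)" .
        qed (use Lpos Cfpos in auto)
        also have "\<dots> = ennreal (L * Cf) * (ennreal (\<bar>Z \<psi>\<bar> powr (p * Rz)) + ennreal (m \<psi> powr (s * R)))"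
          using Lpos Cfpos by (simp add: ennreal_mult'' ennreal_plus [symmetric] del: ennreal_plus)
        finally show ?case .
      qed
    qed
    also have "\<dots> = ennreal (L * Cf) * ((\<integral>\<^sup>+ \<psi>. ennreal (\<bar>Z \<psi>\<bar> powr (p * Rz)) \<partial>\<mu>) + (\<integral>\<^sup>+ \<psi>. ennreal (m \<psi> powr (s * R)) \<partial>\<mu>))"
    proof -
      have ma: "(\<lambda>\<psi>. ennreal (\<bar>Z \<psi>\<bar> powr (p * Rz))) \<in> borel_measurable \<mu>" using Z_meas by measurable
      have mb: "(\<lambda>\<psi>. ennreal (m \<psi> powr (s * R))) \<in> borel_measurable \<mu>" using mm by measurable
      have "(\<integral>\<^sup>+ \<psi>. ennreal (L * Cf) * (ennreal (\<bar>Z \<psi>\<bar> powr (p * Rz)) + ennreal (m \<psi> powr (s * R))) \<partial>\<mu>)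
          = ennreal (L * Cf) * (\<integral>\<^sup>+ \<psi>. (ennreal (\<bar>Z \<psi>\<bar> powr (p * Rz)) + ennreal (m \<psi> powr (s * R))) \<partial>\<mu>)"
        by (rule nn_integral_cmult) (rule borel_measurable_add[OF ma mb])
      also have "(\<integral>\<^sup>+ \<psi>. (ennreal (\<bar>Z \<psi>\<bar> powr (p * Rz)) + ennreal (m \<psi> powr (s * R))) \<partial>\<mu>)
          = (\<integral>\<^sup>+ \<psi>. ennreal (\<bar>Z \<psi>\<bar> powr (p * Rz)) \<partial>\<mu>) + (\<integral>\<^sup>+ \<psi>. ennreal (m \<psi> powr (s * R)) \<partial>\<mu>)"
        by (rule nn_integral_add[OF ma mb])
      finally show ?thesis .
    qed
    also have "\<dots> < \<infinity>"
    proof -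
      have "(\<integral>\<^sup>+ \<psi>. ennreal (\<bar>Z \<psi>\<bar> powr (p * Rz)) \<partial>\<mu>) < \<infinity>"
        by (rule gauss_moment[OF Z_meas Z_gauss]) (use p Rzpos in simp)
      moreover have "(\<integral>\<^sup>+ \<psi>. ennreal (m \<psi> powr (s * R)) \<partial>\<mu>) < \<infinity>" by (rule msfin[OF sR])
      ultimately show ?thesis by (simp add: ennreal_mult_less_top)
    qed
    finally show "(\<integral>\<^sup>+ \<phi>. ennreal (\<bar>Z (cen \<phi>) * indicator E \<phi>\<bar> powr p) \<partial>\<nu>) < \<infinity>" .
  qed
  show ?thesis using part1 part2 unfolding cen_def by blast
qed

end
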